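(* Let $(X,d,\ll,\le,\tau)$ and $(Y,\widetilde d,\widetilde\ll,\widetilde\le,\widetilde\tau)$ be Lorentzian length spaces and let $f:X\to Y$ be a surjective distance homothetic map that is locally causally Lipschitz. If $(X,d,\ll,\le,\tau)$ is strongly causal and $(Y,\widetilde d)$ is locally compact, then $f$ sends maximal causal curves in $X$ to maximal causal curves in $Y$: if $x\le y$ and $\gamma:[a,b]\to X$ is a future directed causal curve from $x$ to $y$ with $L_\tau(\gamma)=\tau(x,y)$, then $f\circ\gamma$ is a future directed causal curve from $f(x)$ to $f(y)$ with $L_{\widetilde\tau}(f\circ\gamma)=\widetilde\tau(f(x),f(y))$.
   Context: A causal space $(X,\ll,\le)$ is a set $X$ with two transitive relations $\ll,\le$ such that $\le$ is reflexive and $x\ll y\Rightarrow x\le y$; write $p<q$ if $p\le q$ and $p\neq q$. Set $I^+(x)=\{y: x\ll y\}$, $I^-(x)=\{y: y\ll x\}$, $J^+(x)=\{y:x\le y\}$, $J^-(x)=\{y:y\le x\}$. A Lorentzian pre-length space $(X,d,\ll,\le,\tau)$ is a causal space together with a metric $d$ on $X$ and a function $\tau:X\times X\to[0,\infty]$ that is lower semicontinuous with respect to the topology of $d$, satisfies $\tau(x,z)\ge\tau(x,y)+\tau(y,z)$ whenever $x\le y\le z$, $\tau(x,y)=0$ if $x\not\le y$, and $\tau(x,y)>0\iff x\ll y$. All topological notions refer to the metric topology of $d$. A future directed causal (resp. timelike) curve is a non-constant Lipschitz map $\gamma:I\to X$ ($I\subset\mathbb R$ an interval) with $\gamma(s)\le\gamma(t)$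 (resp. $\gamma(s)\ll\gamma(t)$) for all $s<t$. For a future directed causal $\gamma:[a,b]\to X$, $L_\tau(\gamma)=\inf\sum_{i=0}^{N-1}\tau(\gamma(t_i),\gamma(t_{i+1}))$ over all partitions $a=t_0<\dots<t_N=b$. The space is causally path connected if whenever $x\le y$ (resp. $x\ll y$) there is a future directed causal (resp. timelike) curve from $x$ to $y$. For open $U\subset X$, $p\le_U q$ means there is a future directed causal curve from $p$ to $q$ with image in $U$. A neighborhood $U$ is causally closed if whenever $p_n\le_U q_n$ with $p_n\to p\in U$, $q_n\to q\in U$, then $p\le_U q$; the space is locally causally closed if every point has a causally closed neighborhood. The space is localizable if every $x$ has a neighborhood $\Omega_x$ such that: (i) all causal curves contained in $\Omega_x$ have uniformly bounded $d$-length; (ii) there is a continuous $\omega_x:\Omega_x\times\Omega_x\to[0,\infty)$ such that $(\Omega_x,d|_{\Omega_x\times\Omega_x},\ll|_{\Omega_x},\le|_{\Omega_x},\omega_x)$ is a Lorentzian pre-length space, and $I^\pm(y)\cap\Omega_x\ne\emptyset$ for every $y\in\Omega_x$; (iii) for all $p,q\in\Omega_x$ with $p<q$ there is a future causal curve $\gamma_{p,q}$ from $p$ to $q$ with $L_\tau(\gamma_{p,q})\ge L_\tau(\gamma)$ for every future causal curve $\gamma\subset\Omega_x$ from $p$ to $q$, and $L_\tau(\gamma_{p,q})=\omega_x(p,q)$. A Lorentzian length space is a causally path connected, locally causally closed, localizable Lorentzian pre-length space with $\tau(x,y)=\sup\{L_\tau(\gamma):\gamma$ a future causal curve from $x$ to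 $y\}$. Strongly causal: the Alexandrov topology (subbase $\{I^+(x)\cap I^-(y)\}$) coincides with the metric topology. A map $f:X\to Y$ is distance homothetic if there is $c>0$ with $\widetilde\tau(f(p),f(q))=c\,\tau(p,q)$ for all $p,q\in X$; it is locally causally Lipschitz if for every $x\in X$ there are an open $U\ni x$ and $M>0$ with $\widetilde d(f(x_1),f(x_2))\le M\,d(x_1,x_2)$ for all $x_1,x_2\in U$ with $x_1\le x_2$. A future directed causal curve $\gamma$ from $x$ to $y$ is maximal if $L_\tau(\gamma)=\tau(x,y)$. *)

theory Defs
  imports "HOL-Analysis.Analysis"
begin

abbreviation mtop :: "'a set \<Rightarrow> ('a \<Rightarrow> 'a \<Rightarrow> real) \<Rightarrow> 'a topology" where
  "mtop S d \<equiv> Metric_space.mtopology S d"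

definition causal_space :: "'a set \<Rightarrow> ('a \<Rightarrow> 'a \<Rightarrow> bool) \<Rightarrow> ('a \<Rightarrow> 'a \<Rightarrow> bool) \<Rightarrow> bool" where
  "causal_space S ll le \<longleftrightarrow>
     (\<forall>x\<in>S. \<forall>y\<in>S. \<forall>z\<in>S. ll x y \<and> ll y z \<longrightarrow> ll x z) \<and>
     (\<forall>x\<in>S. \<forall>y\<in>S. \<forall>z\<in>S. le x y \<and> le y z \<longrightarrow> le x z) \<and>
     (\<forall>x\<in>S. le x x) \<and>
     (\<forall>x\<in>S. \<forall>y\<in>S. ll x y \<longrightarrow> le x y)"

definition lpls :: "'a set \<Rightarrow> ('a \<Rightarrow> 'a \<Rightarrow> real) \<Rightarrow> ('a \<Rightarrow> 'a \<Rightarrow> bool) \<Rightarrow> ('a \<Rightarrow> 'a \<Rightarrow> bool)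
                     \<Rightarrow> ('a \<Rightarrow> 'a \<Rightarrow> ennreal) \<Rightarrow> bool" where
  "lpls S d ll le tau \<longleftrightarrow>
     Metric_space S d \<and> causal_space S ll le \<and>
     (\<forall>r. openin (prod_topology (mtop S d) (mtop S d)) {(x, y). x \<in> S \<and> y \<in> S \<and> r < tau x y}) \<and>
     (\<forall>x\<in>S. \<forall>y\<in>S. \<forall>z\<in>S. le x y \<and> le y z \<longrightarrow> tau x z \<ge> tau x y + tau y z) \<and>
     (\<forall>x\<in>S. \<forall>y\<in>S. \<not> le x y \<longrightarrow> tau x y = 0) \<and>
     (\<forall>x\<in>S. \<forall>y\<in>S. tau x y > 0 \<longleftrightarrow> ll x y)"

definition lipschitz_curve :: "('a \<Rightarrow> 'a \<Rightarrow> real) \<Rightarrow> real \<Rightarrow> real \<Rightarrow> (real \<Rightarrow> 'a) \<Rightarrow> bool" where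
  "lipschitz_curve d a b \<gamma> \<longleftrightarrow>
     (\<exists>L. \<forall>s\<in>{a..b}. \<forall>t\<in>{a..b}. d (\<gamma> s) (\<gamma> t) \<le> L * \<bar>s - t\<bar>)"

text \<open>Future directed causal (resp. timelike, with rel = ll) curve on [a,b]: non-constant,
  Lipschitz, and rel (gamma s) (gamma t) for s < t.\<close>
definition fd_curve :: "('a \<Rightarrow> 'a \<Rightarrow> real) \<Rightarrow> ('a \<Rightarrow> 'a \<Rightarrow> bool) \<Rightarrow> real \<Rightarrow> real \<Rightarrow> (real \<Rightarrow> 'a) \<Rightarrow> bool" where
  "fd_curve d rel a b \<gamma> \<longleftrightarrow> a < b \<and> lipschitz_curve d a b \<gamma> \<and>
     (\<exists>s\<in>{a..b}. \<exists>t\<in>{a..b}. \<gamma> s \<noteq> \<gamma> t) \<and>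
     (\<forall>s\<in>{a..b}. \<forall>t\<in>{a..b}. s < t \<longrightarrow> rel (\<gamma> s) (\<gamma> t))"

definition curve_from_to :: "('a \<Rightarrow> 'a \<Rightarrow> real) \<Rightarrow> ('a \<Rightarrow> 'a \<Rightarrow> bool) \<Rightarrow> real \<Rightarrow> real \<Rightarrow> (real \<Rightarrow> 'a)
                           \<Rightarrow> 'a \<Rightarrow> 'a \<Rightarrow> bool" where
  "curve_from_to d rel a b \<gamma> x y \<longleftrightarrow> fd_curve d rel a b \<gamma> \<and> \<gamma> a = x \<and> \<gamma> b = y"

definition partitions :: "real \<Rightarrow> real \<Rightarrow> (nat \<times> (nat \<Rightarrow> real)) set" where
  "partitions a b = {(N, t). N > 0 \<and> t 0 = a \<and> t N = b \<and> (\<forall>i<N. t i < t (Suc i))}"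

definition Ltau :: "('a \<Rightarrow> 'a \<Rightarrow> ennreal) \<Rightarrow> real \<Rightarrow> real \<Rightarrow> (real \<Rightarrow> 'a) \<Rightarrow> ennreal" where
  "Ltau tau a b \<gamma> = (INF (N, t)\<in>partitions a b. \<Sum>i<N. tau (\<gamma> (t i)) (\<gamma> (t (Suc i))))"

definition dlength :: "('a \<Rightarrow> 'a \<Rightarrow> real) \<Rightarrow> real \<Rightarrow> real \<Rightarrow> (real \<Rightarrow> 'a) \<Rightarrow> ennreal" where
  "dlength d a b \<gamma> = (SUP (N, t)\<in>partitions a b. \<Sum>i<N. ennreal (d (\<gamma> (t i)) (\<gamma> (t (Suc i)))))"

definition causally_path_connected :: "('a \<Rightarrow> 'a \<Rightarrow> real) \<Rightarrow> ('a \<Rightarrow> 'a \<Rightarrow> bool) \<Rightarrow> ('a \<Rightarrow> 'a \<Rightarrow> bool) \<Rightarrow> bool" where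
  "causally_path_connected d ll le \<longleftrightarrow>
     (\<forall>x y. le x y \<and> x \<noteq> y \<longrightarrow> (\<exists>a b \<gamma>. curve_from_to d le a b \<gamma> x y)) \<and>
     (\<forall>x y. ll x y \<longrightarrow> (\<exists>a b \<gamma>. curve_from_to d ll a b \<gamma> x y))"

text \<open>p \<le>_U q (taken reflexive: p = q or a causal curve in U from p to q).\<close>
definition le_in :: "('a \<Rightarrow> 'a \<Rightarrow> real) \<Rightarrow> ('a \<Rightarrow> 'a \<Rightarrow> bool) \<Rightarrow> 'a set \<Rightarrow> 'a \<Rightarrow> 'a \<Rightarrow> bool" where
  "le_in d le U p q \<longleftrightarrow> p = q \<or>
     (\<exists>a b \<gamma>. curve_from_to d le a b \<gamma> p q \<and> \<gamma> ` {a..b} \<subseteq> U)"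

definition causally_closed :: "('a \<Rightarrow> 'a \<Rightarrow> real) \<Rightarrow> ('a \<Rightarrow> 'a \<Rightarrow> bool) \<Rightarrow> 'a set \<Rightarrow> bool" where
  "causally_closed d le U \<longleftrightarrow>
     (\<forall>p q ps qs. (\<forall>n. le_in d le U (ps n) (qs n)) \<and> p \<in> U \<and> q \<in> U \<and>
        limitin (mtop UNIV d) ps p sequentially \<and> limitin (mtop UNIV d) qs q sequentially
        \<longrightarrow> le_in d le U p q)"

definition locally_causally_closed :: "('a \<Rightarrow> 'a \<Rightarrow> real) \<Rightarrow> ('a \<Rightarrow> 'a \<Rightarrow> bool) \<Rightarrow> bool" where
  "locally_causally_closed d le \<longleftrightarrow>
     (\<forall>x. \<exists>U. openin (mtop UNIV d) U \<and> x \<in> U \<and> causally_closed d le U)"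

definition localizable :: "('a \<Rightarrow> 'a \<Rightarrow> real) \<Rightarrow> ('a \<Rightarrow> 'a \<Rightarrow> bool) \<Rightarrow> ('a \<Rightarrow> 'a \<Rightarrow> bool)
                           \<Rightarrow> ('a \<Rightarrow> 'a \<Rightarrow> ennreal) \<Rightarrow> bool" where
  "localizable d ll le tau \<longleftrightarrow>
     (\<forall>x. \<exists>\<Omega> V. openin (mtop UNIV d) V \<and> x \<in> V \<and> V \<subseteq> \<Omega> \<and>
        \<comment> \<open>(i)\<close>
        (\<exists>C::real. \<forall>a b \<gamma>. fd_curve d le a b \<gamma> \<and> \<gamma> ` {a..b} \<subseteq> \<Omega> \<longrightarrow> dlength d a b \<gamma> \<le> ennreal C) \<and>
        \<comment> \<open>(ii)\<close>
        (\<exists>\<omega> :: 'a \<Rightarrow> 'a \<Rightarrow> real.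
           (\<forall>p\<in>\<Omega>. \<forall>q\<in>\<Omega>. \<omega> p q \<ge> 0) \<and>
           continuous_map (subtopology (prod_topology (mtop UNIV d) (mtop UNIV d)) (\<Omega> \<times> \<Omega>))
                          euclideanreal (\<lambda>(p, q). \<omega> p q) \<and>
           lpls \<Omega> d ll le (\<lambda>p q. ennreal (\<omega> p q)) \<and>
           (\<forall>y\<in>\<Omega>. (\<exists>z\<in>\<Omega>. ll y z) \<and> (\<exists>z\<in>\<Omega>. ll z y)) \<and>
        \<comment> \<open>(iii)\<close>
           (\<forall>p\<in>\<Omega>. \<forall>q\<in>\<Omega>. le p q \<and> p \<noteq> q \<longrightarrow>
              (\<exists>a b \<gamma>. curve_from_to d le a b \<gamma> p q \<and>
                 (\<forall>a' b' \<gamma>'. curve_from_to d le a' b' \<gamma>' p q \<and> \<gamma>' ` {a'..b'} \<subseteq> \<Omega>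
                     \<longrightarrow> Ltau tau a' b' \<gamma>' \<le> Ltau tau a b \<gamma>) \<and>
                 Ltau tau a b \<gamma> = ennreal (\<omega> p q)))))"

definition lorentzian_length_space :: "('a \<Rightarrow> 'a \<Rightarrow> real) \<Rightarrow> ('a \<Rightarrow> 'a \<Rightarrow> bool) \<Rightarrow> ('a \<Rightarrow> 'a \<Rightarrow> bool)
                                        \<Rightarrow> ('a \<Rightarrow> 'a \<Rightarrow> ennreal) \<Rightarrow> bool" where
  "lorentzian_length_space d ll le tau \<longleftrightarrow>
     lpls UNIV d ll le tau \<and> causally_path_connected d ll le \<and>
     locally_causally_closed d le \<and> localizable d ll le tau \<and>
     (\<forall>x y. tau x y = (SUP (a, b, \<gamma>)\<in>{(a, b, \<gamma>). curve_from_to d le a b \<gamma> x y}. Ltau tau a b \<gamma>))"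

definition strongly_causal :: "('a \<Rightarrow> 'a \<Rightarrow> real) \<Rightarrow> ('a \<Rightarrow> 'a \<Rightarrow> bool) \<Rightarrow> bool" where
  "strongly_causal d ll \<longleftrightarrow>
     topology_generated_by {{z. ll x z} \<inter> {z. ll z y} | x y. True} = mtop UNIV d"

definition distance_homothetic :: "('a \<Rightarrow> 'a \<Rightarrow> ennreal) \<Rightarrow> ('b \<Rightarrow> 'b \<Rightarrow> ennreal) \<Rightarrow> ('a \<Rightarrow> 'b) \<Rightarrow> bool" where
  "distance_homothetic tau tau' f \<longleftrightarrow>
     (\<exists>c::real. c > 0 \<and> (\<forall>p q. tau' (f p) (f q) = ennreal c * tau p q))"

definition locally_causally_lipschitz :: "('a \<Rightarrow> 'a \<Rightarrow> real) \<Rightarrow> ('a \<Rightarrow> 'a \<Rightarrow> bool) \<Rightarrow> ('b \<Rightarrow> 'b \<Rightarrow> real)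
                                          \<Rightarrow> ('a \<Rightarrow> 'b) \<Rightarrow> bool" where
  "locally_causally_lipschitz d le d' f \<longleftrightarrow>
     (\<forall>x. \<exists>U M. openin (mtop UNIV d) U \<and> x \<in> U \<and> M > 0 \<and>
        (\<forall>x1\<in>U. \<forall>x2\<in>U. le x1 x2 \<longrightarrow> d' (f x1) (f x2) \<le> M * d x1 x2))"

end

theory Submission
  imports Defs
begin
lemma mult_INF_ennreal:
  fixes g :: "'i \<Rightarrow> ennreal"
  assumes c: "c > 0"
  shows "ennreal c * (INF i\<in>I. g i) = (INF i\<in>I. ennreal c * g i)"
proof (rule antisym)
  show "ennreal c * (INF i\<in>I. g i) \<le> (INF i\<in>I. ennreal c * g i)"
    by (rule INF_greatest) (simp add: INF_lower mult_left_mono)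
  have inv: "ennreal (1/c) * ennreal c = 1"
    using c by (simp add: ennreal_mult''[symmetric])
  have "ennreal (1/c) * (INF i\<in>I. ennreal c * g i) \<le> (INF i\<in>I. g i)"
  proof (rule INF_greatest)
    fix i assume "i \<in> I"
    have "ennreal (1/c) * (INF i\<in>I. ennreal c * g i) \<le> ennreal (1/c) * (ennreal c * g i)"
      using \<open>i \<in> I\<close> by (intro mult_left_mono INF_lower) auto
    also have "\<dots> = g i" by (simp add: mult.assoc[symmetric] inv)
    finally show "ennreal (1/c) * (INF i\<in>I. ennreal c * g i) \<le> g i" .
  qed
  then have "ennreal c * (ennreal (1/c) * (INF i\<in>I. ennreal c * g i)) \<le> ennreal c * (INF i\<in>I. g i)"
    by (simp add: mult_left_mono)
  then show "(INF i\<in>I. ennreal c * g i) \<le> ennreal c * (INF i\<in>I. g i)"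
    by (simp add: mult.assoc[symmetric] inv mult.commute[of "ennreal c"])
qed

lemma lls_basic:
  assumes "lorentzian_length_space d ll le tau"
  shows lls_metric: "Metric_space UNIV d"
    and lls_ll_trans: "\<And>x y z. ll x y \<Longrightarrow> ll y z \<Longrightarrow> ll x z"
    and lls_le_trans: "\<And>x y z. le x y \<Longrightarrow> le y z \<Longrightarrow> le x z"
    and lls_le_refl: "\<And>x. le x x"
    and lls_ll_le: "\<And>x y. ll x y \<Longrightarrow> le x y"
    and lls_rev: "\<And>x y z. le x y \<Longrightarrow> le y z \<Longrightarrow> tau x y + tau y z \<le> tau x z"
    and lls_pos: "\<And>x y. 0 < tau x y \<longleftrightarrow> ll x y"
    and lls_cpc: "causally_path_connected d ll le"
    and lls_lcc: "locally_causally_closed d le"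
    and lls_loc: "localizable d ll le tau"
proof -
  have A1: "lpls UNIV d ll le tau" using assms unfolding lorentzian_length_space_def by (elim conjE) assumption
  have A2: "causally_path_connected d ll le" using assms unfolding lorentzian_length_space_def by (elim conjE) assumption
  have A3: "locally_causally_closed d le" using assms unfolding lorentzian_length_space_def by (elim conjE) assumption
  have A4: "localizable d ll le tau" using assms unfolding lorentzian_length_space_def by (elim conjE) assumption
  note A = A1 A2 A3 A4
  have B1: "Metric_space UNIV d" using A(1) unfolding lpls_def by (elim conjE) assumption
  have B2: "causal_space UNIV ll le" using A(1) unfolding lpls_def by (elim conjE) assumption
  have B3: "(\<forall>x\<in>UNIV. \<forall>y\<in>UNIV. \<forall>z\<in>UNIV. le x y \<and> le y z \<longrightarrow> tau x z \<ge> tau x y + tau y z)"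
    using A(1) unfolding lpls_def by (elim conjE) assumption
  have B4: "(\<forall>x\<in>UNIV. \<forall>y\<in>UNIV. tau x y > 0 \<longleftrightarrow> ll x y)"
    using A(1) unfolding lpls_def by (elim conjE) assumption
  note B = B1 B2 B3 B4
  have C: "(\<forall>x\<in>UNIV. \<forall>y\<in>UNIV. \<forall>z\<in>UNIV. ll x y \<and> ll y z \<longrightarrow> ll x z) \<and>
     (\<forall>x\<in>UNIV. \<forall>y\<in>UNIV. \<forall>z\<in>UNIV. le x y \<and> le y z \<longrightarrow> le x z) \<and>
     (\<forall>x\<in>UNIV. le x x) \<and>
     (\<forall>x\<in>UNIV. \<forall>y\<in>UNIV. ll x y \<longrightarrow> le x y)"
    using B(2) unfolding causal_space_def by assumption
  show "Metric_space UNIV d" by (rule B(1))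
  show "\<And>x y z. ll x y \<Longrightarrow> ll y z \<Longrightarrow> ll x z" using C by blast
  show "\<And>x y z. le x y \<Longrightarrow> le y z \<Longrightarrow> le x z" using C by blast
  show "\<And>x. le x x" using C by blast
  show "\<And>x y. ll x y \<Longrightarrow> le x y" using C by blast
  show "\<And>x y z. le x y \<Longrightarrow> le y z \<Longrightarrow> tau x y + tau y z \<le> tau x z" using B(3) by blast
  show "\<And>x y. 0 < tau x y \<longleftrightarrow> ll x y" using B(4) by blast
  show "causally_path_connected d ll le" "locally_causally_closed d le" "localizable d ll le tau"
    by (rule A2, rule A3, rule A4)
qed

lemma push_up1:
  assumes X: "lorentzian_length_space d ll le tau" and "le x y" "ll y z"
  shows "ll x z"
proof -
  have "le y z" using lls_ll_le[OF X] assms(3) .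
  then have "tau x y + tau y z \<le> tau x z" using lls_rev[OF X] assms(2) by blast
  moreover have "0 < tau y z" using lls_pos[OF X] assms(3) by blast
  moreover have "tau y z \<le> tau x y + tau y z" by (rule add_increasing) auto
  ultimately have "0 < tau x z" by (meson order_less_le_trans)
  then show ?thesis using lls_pos[OF X] by blast
qed

lemma push_up2:
  assumes X: "lorentzian_length_space d ll le tau" and "ll x y" "le y z"
  shows "ll x z"
proof -
  have "le x y" using lls_ll_le[OF X] assms(2) .
  then have "tau x y + tau y z \<le> tau x z" using lls_rev[OF X] assms(3) by blast
  moreover have "0 < tau x y" using lls_pos[OF X] assms(2) by blast
  moreover have "tau x y \<le> tau x y + tau y z" by (rule add_increasing2) auto
  ultimately have "0 < tau x z" by (meson order_less_le_trans)
  then show ?thesis using lls_pos[OF X] by blast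
qed

lemma curve_near:
  assumes M: "Metric_space UNIV d" and c: "fd_curve d rel a b \<sigma>" and r: "r > 0"
  shows "\<exists>t. a < t \<and> t \<le> b \<and> d (\<sigma> a) (\<sigma> t) < r"
    and "\<exists>t. a \<le> t \<and> t < b \<and> d (\<sigma> b) (\<sigma> t) < r"
proof -
  obtain L where L: "\<forall>s\<in>{a..b}. \<forall>t\<in>{a..b}. d (\<sigma> s) (\<sigma> t) \<le> L * \<bar>s - t\<bar>" and ab: "a < b"
    using c unfolding fd_curve_def lipschitz_curve_def by blast
  define h where "h = min (b - a) (r / (\<bar>L\<bar> + 1)) / 2"
  have h0: "0 < h" "h < b - a" using ab r by (auto simp: h_def)
  have hr: "\<bar>L\<bar> * h < r"
  proof -
    have p: "0 < r / (\<bar>L\<bar> + 1)" using r by (simp add: add_nonneg_pos)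
    have "min (b - a) (r / (\<bar>L\<bar> + 1)) \<le> r / (\<bar>L\<bar> + 1)" by simp
    moreover have "m / 2 < q" if "m \<le> q" "0 < q" for m q :: real using that by linarith
    ultimately have "h < r / (\<bar>L\<bar> + 1)" using p unfolding h_def by blast
    then have "(\<bar>L\<bar> + 1) * h < r" by (simp add: field_simps)
    moreover have "\<bar>L\<bar> * h \<le> (\<bar>L\<bar> + 1) * h" using h0 by (simp add: mult_right_mono)
    ultimately show ?thesis by linarith
  qed
  have "d (\<sigma> a) (\<sigma> (a + h)) \<le> L * \<bar>a - (a + h)\<bar>" using L h0 ab by (intro L[rule_format]) auto
  also have "\<dots> \<le> \<bar>L\<bar> * h" using h0 by (simp add: abs_mult[symmetric])
  finally show "\<exists>t. a < t \<and> t \<le> b \<and> d (\<sigma> a) (\<sigma> t) < r"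
    using h0 hr by (intro exI[of _ "a + h"]) auto
  have "d (\<sigma> b) (\<sigma> (b - h)) \<le> L * \<bar>b - (b - h)\<bar>" using L h0 ab by (intro L[rule_format]) auto
  also have "\<dots> \<le> \<bar>L\<bar> * h" using h0 by (simp add: abs_mult[symmetric])
  finally show "\<exists>t. a \<le> t \<and> t < b \<and> d (\<sigma> b) (\<sigma> t) < r"
    using h0 hr by (intro exI[of _ "b - h"]) auto
qed

lemma near_timelike:
  assumes X: "lorentzian_length_space d ll le tau"
    and W: "openin (mtop UNIV d) W" "w \<in> W"
  shows "\<exists>w'\<in>W. ll w w'" and "\<exists>w'\<in>W. ll w' w"
proof -
  have M: "Metric_space UNIV d" using lls_metric[OF X] .
  obtain r where r: "r > 0" "Metric_space.mball UNIV d w r \<subseteq> W"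
    using W Metric_space.openin_mtopology[OF M] by blast
  have "\<exists>\<Omega>. w \<in> \<Omega> \<and> (\<forall>y\<in>\<Omega>. (\<exists>z\<in>\<Omega>. ll y z) \<and> (\<exists>z\<in>\<Omega>. ll z y))"
    using lls_loc[OF X] unfolding localizable_def
    apply -
    apply (drule spec[of _ w])
    apply (elim exE conjE)
    apply (rule_tac x=\<Omega> in exI)
    apply (intro conjI)
     apply blast
    apply assumption
    done
  then obtain \<Omega> where "w \<in> \<Omega>" and fp: "\<forall>y\<in>\<Omega>. (\<exists>z\<in>\<Omega>. ll y z) \<and> (\<exists>z\<in>\<Omega>. ll z y)"
    by blast
  then obtain z1 z2 where z: "ll w z1" "ll z2 w" by blast
  have cpc: "causally_path_connected d ll le" using lls_cpc[OF X] .
  obtain a b \<sigma> where s: "curve_from_to d ll a b \<sigma> w z1"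
    using cpc z unfolding causally_path_connected_def by blast
  then have fd: "fd_curve d ll a b \<sigma>" "\<sigma> a = w" unfolding curve_from_to_def by auto
  obtain t where t: "a < t" "t \<le> b" "d (\<sigma> a) (\<sigma> t) < r" using curve_near(1)[OF M fd(1) r(1)] by blast
  have "\<sigma> t \<in> W" using r t fd Metric_space.in_mball[OF M] by auto
  moreover have "ll w (\<sigma> t)" using fd t unfolding fd_curve_def by auto
  ultimately show "\<exists>w'\<in>W. ll w w'" by blast
  obtain a b \<sigma> where s: "curve_from_to d ll a b \<sigma> z2 w"
    using cpc z unfolding causally_path_connected_def by blast
  then have fd: "fd_curve d ll a b \<sigma>" "\<sigma> b = w" unfolding curve_from_to_def by auto
  obtain t where t: "a \<le> t" "t < b" "d (\<sigma> b) (\<sigma> t) < r" using curve_near(2)[OF M fd(1) r(1)] by blast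
  have "\<sigma> t \<in> W" using r t fd Metric_space.in_mball[OF M] by auto
  moreover have "ll (\<sigma> t) w" using fd t unfolding fd_curve_def by auto
  ultimately show "\<exists>w'\<in>W. ll w' w" by blast
qed


definition cconvex :: "('a \<Rightarrow> 'a \<Rightarrow> bool) \<Rightarrow> 'a set \<Rightarrow> bool" where
  "cconvex le C \<longleftrightarrow> (\<forall>p\<in>C. \<forall>q\<in>C. \<forall>w. le p w \<and> le w q \<longrightarrow> w \<in> C)"

lemma sc_open_iff:
  assumes sc: "strongly_causal d ll"
  shows "openin (mtop UNIV d) U \<longleftrightarrow>
         generate_topology_on {{z. ll x z} \<inter> {z. ll z y} | x y. True} U"
proof -
  have e: "mtop UNIV d = topology_generated_by {{z. ll x z} \<inter> {z. ll z y} | x y. True}"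
    using sc unfolding strongly_causal_def by (rule sym)
  show ?thesis unfolding e by (rule openin_topology_generated_by_iff)
qed

lemma sc_convex:
  assumes X: "lorentzian_length_space d ll le tau" and sc: "strongly_causal d ll"
    and W: "openin (mtop UNIV d) W" "z \<in> W"
  shows "\<exists>C. openin (mtop UNIV d) C \<and> z \<in> C \<and> C \<subseteq> W \<and> cconvex le C"
proof -
  let ?S = "{{z. ll x z} \<inter> {z. ll z y} | x y. True}"
  have key: "\<forall>z\<in>W. \<exists>C. generate_topology_on ?S C \<and> z \<in> C \<and> C \<subseteq> W \<and> cconvex le C"
    if "generate_topology_on ?S W" for W
    using that
  proof (induction rule: generate_topology_on.induct)
    case Empty
    then show ?case by simp
  next
    case (Int a b)
    show ?case
    proof
      fix z assume "z \<in> a \<inter> b"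
      then obtain Ca Cb where "generate_topology_on ?S Ca" "z \<in> Ca" "Ca \<subseteq> a" "cconvex le Ca"
        "generate_topology_on ?S Cb" "z \<in> Cb" "Cb \<subseteq> b" "cconvex le Cb"
        using Int.IH by blast
      moreover have "cconvex le (Ca \<inter> Cb)"
        using \<open>cconvex le Ca\<close> \<open>cconvex le Cb\<close> unfolding cconvex_def by blast
      moreover have "generate_topology_on ?S (Ca \<inter> Cb)"
        using \<open>generate_topology_on ?S Ca\<close> \<open>generate_topology_on ?S Cb\<close>
        by (rule generate_topology_on.Int)
      ultimately show "\<exists>C. generate_topology_on ?S C \<and> z \<in> C \<and> C \<subseteq> a \<inter> b \<and> cconvex le C"
        by blast
    qed
  next
    case (UN K)
    show ?case
    proof
      fix z assume "z \<in> \<Union>K"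
      then obtain k where "k \<in> K" "z \<in> k" by blast
      then obtain C where "generate_topology_on ?S C" "z \<in> C" "C \<subseteq> k" "cconvex le C"
        using UN.IH by blast
      then show "\<exists>C. generate_topology_on ?S C \<and> z \<in> C \<and> C \<subseteq> \<Union>K \<and> cconvex le C"
        using \<open>k \<in> K\<close> by blast
    qed
  next
    case (Basis s)
    then obtain x y where s: "s = {z. ll x z} \<inter> {z. ll z y}" by blast
    have "cconvex le s"
      unfolding cconvex_def
    proof (intro ballI allI impI)
      fix p q w assume "p \<in> s" "q \<in> s" "le p w \<and> le w q"
      then have "ll x p" "ll q y" "le p w" "le w q" using s by auto
      then have "ll x w" "ll w y" using push_up1[OF X] push_up2[OF X] by meson+
      then show "w \<in> s" using s by simp
    qed
    moreover have "generate_topology_on ?S s" using Basis.hyps by (rule generate_topology_on.Basis)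
    ultimately show ?case by blast
  qed
  have "generate_topology_on ?S W" using W(1) sc_open_iff[OF sc] by simp
  then obtain C where "generate_topology_on ?S C" "z \<in> C" "C \<subseteq> W" "cconvex le C"
    using key W(2) by blast
  moreover then have "openin (mtop UNIV d) C" using sc_open_iff[OF sc] by simp
  ultimately show ?thesis by blast
qed

lemma hom_inj:
  assumes X: "lorentzian_length_space d ll le tau"
    and posY: "\<And>x y. 0 < tau' x y \<longleftrightarrow> ll' x y"
    and hom: "distance_homothetic tau tau' f"
    and sc: "strongly_causal d ll"
    and eq: "f p = f q"
  shows "p = q"
proof (rule ccontr)
  assume ne: "p \<noteq> q"
  have M: "Metric_space UNIV d" using lls_metric[OF X] .
  obtain c where c: "c > 0" "\<forall>p q. tau' (f p) (f q) = ennreal c * tau p q"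
    using hom unfolding distance_homothetic_def by blast
  have pos: "\<And>u v. ll u v \<longleftrightarrow> 0 < tau' (f u) (f v)"
    using c lls_pos[OF X] by (simp add: ennreal_zero_less_mult_iff)
  have l1: "\<And>r. ll p r \<longleftrightarrow> ll q r" using pos eq by metis
  have l2: "\<And>r. ll r p \<longleftrightarrow> ll r q" using pos eq by metis
  let ?S = "{{z. ll x z} \<inter> {z. ll z y} | x y. True}"
  have key: "p \<in> U \<longleftrightarrow> q \<in> U" if "generate_topology_on ?S U" for U
    using that
  proof (induction rule: generate_topology_on.induct)
    case (Basis s)
    then show ?case using l1 l2 by auto
  qed auto
  have "openin (mtop UNIV d) (Metric_space.mball UNIV d p (d p q))"
    using Metric_space.openin_mball[OF M] by blast
  then have "generate_topology_on ?S (Metric_space.mball UNIV d p (d p q))"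
    using sc_open_iff[OF sc] by blast
  moreover have "p \<in> Metric_space.mball UNIV d p (d p q)"
    using ne Metric_space.mdist_pos_less[OF M] Metric_space.in_mball[OF M] Metric_space.mdist_zero[OF M] by auto
  moreover have "q \<notin> Metric_space.mball UNIV d p (d p q)"
    using Metric_space.in_mball[OF M] by auto
  ultimately show False using key by blast
qed


lemma local_pres:
  assumes X: "lorentzian_length_space d ll le tau"
    and Y: "lorentzian_length_space d' ll' le' tau'"
    and hom: "distance_homothetic tau tau' f"
    and lip: "locally_causally_lipschitz d le d' f"
    and sc: "strongly_causal d ll"
  shows "\<exists>C M. openin (mtop UNIV d) C \<and> z \<in> C \<and> M > 0 \<and>
           (\<forall>p\<in>C. \<forall>q\<in>C. le p q \<longrightarrow> le' (f p) (f q) \<and> d' (f p) (f q) \<le> M * d p q)"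
proof -
  have MX: "Metric_space UNIV d" using lls_metric[OF X] .
  have MY: "Metric_space UNIV d'" using lls_metric[OF Y] .
  obtain c where c: "c > 0" "\<forall>p q. tau' (f p) (f q) = ennreal c * tau p q"
    using hom unfolding distance_homothetic_def by blast
  have llf: "ll' (f u) (f v)" if "ll u v" for u v
  proof -
    have "0 < tau u v" using that lls_pos[OF X] by blast
    then have "0 < tau' (f u) (f v)" using c by (simp add: ennreal_zero_less_mult_iff)
    then show ?thesis using lls_pos[OF Y] by blast
  qed
  obtain V M where V: "openin (mtop UNIV d) V" "z \<in> V" "M > 0"
    and VL: "\<forall>x1\<in>V. \<forall>x2\<in>V. le x1 x2 \<longrightarrow> d' (f x1) (f x2) \<le> M * d x1 x2"
    using lip unfolding locally_causally_lipschitz_def by blast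
  obtain U where U: "openin (mtop UNIV d') U" "f z \<in> U" "causally_closed d' le' U"
    using lls_lcc[OF Y] unfolding locally_causally_closed_def by blast
  obtain \<rho> where \<rho>: "\<rho> > 0" "Metric_space.mball UNIV d' (f z) \<rho> \<subseteq> U"
    using Metric_space.openin_mtopology[OF MY] U by blast
  define \<epsilon> where "\<epsilon> = \<rho> / (4 * M)"
  have \<epsilon>: "\<epsilon> > 0" "3 * M * \<epsilon> < \<rho>"
    using \<rho> V(3) by (auto simp: \<epsilon>_def field_simps)
  define B where "B = Metric_space.mball UNIV d z \<epsilon> \<inter> V"
  have B: "openin (mtop UNIV d) B" "z \<in> B"
    unfolding B_def using V \<epsilon> Metric_space.openin_mball[OF MX] Metric_space.centre_in_mball_iff[OF MX]
    by auto
  obtain r1 where r1: "r1 \<in> B" "ll r1 z" using near_timelike(2)[OF X B] by blast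
  obtain r2 where r2: "ll z r2"
    using near_timelike(1)[OF X Metric_space.open_in_mspace[OF MX], of z] by blast
  define D where "D = {w. ll r1 w} \<inter> {w. ll w r2}"
  have "generate_topology_on {{z. ll x z} \<inter> {z. ll z y} | x y. True} D"
    unfolding D_def by (rule generate_topology_on.Basis) blast
  then have D: "openin (mtop UNIV d) D" using sc_open_iff[OF sc] by blast
  have zD: "z \<in> D" using r1 r2 unfolding D_def by simp
  obtain C where C: "openin (mtop UNIV d) C" "z \<in> C" "C \<subseteq> B \<inter> D" "cconvex le C"
    using sc_convex[OF X sc openin_Int[OF B(1) D], of z] B zD by blast
  have CV: "C \<subseteq> V" using C B_def by blast
  have fU: "f w \<in> U" if w: "w \<in> C" for w
  proof -
    have w1: "d z w < \<epsilon>" "w \<in> V" "ll r1 w"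
      using w C unfolding B_def D_def using Metric_space.in_mball[OF MX] by auto
    have r1': "d z r1 < \<epsilon>" "r1 \<in> V" using r1 unfolding B_def using Metric_space.in_mball[OF MX] by auto
    have a1: "d' (f r1) (f z) \<le> M * d r1 z" using VL r1' V(2) r1(2) lls_ll_le[OF X] by blast
    have a2: "d' (f r1) (f w) \<le> M * d r1 w" using VL r1' w1 lls_ll_le[OF X] by blast
    have "d r1 w \<le> d r1 z + d z w" using Metric_space.triangle[OF MX] by blast
    moreover have "d r1 z = d z r1" using Metric_space.commute[OF MX] by blast
    ultimately have "d r1 w < 2 * \<epsilon>" using w1 r1' by linarith
    then have a3: "M * d r1 w \<le> M * (2 * \<epsilon>)" using V(3) by simp
    have a4: "M * d r1 z \<le> M * \<epsilon>" using V(3) r1' \<open>d r1 z = d z r1\<close> by simp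
    have "d' (f z) (f w) \<le> d' (f z) (f r1) + d' (f r1) (f w)"
      using Metric_space.triangle[OF MY] by blast
    moreover have "d' (f z) (f r1) = d' (f r1) (f z)" using Metric_space.commute[OF MY] by blast
    ultimately have "d' (f z) (f w) \<le> 3 * M * \<epsilon>" using a1 a2 a3 a4 by linarith
    then have "d' (f z) (f w) < \<rho>" using \<epsilon> by linarith
    then show ?thesis using \<rho>(2) Metric_space.in_mball[OF MY] by blast
  qed
  have main: "le' (f p) (f q)" if pq: "p \<in> C" "q \<in> C" "le p q" for p q
  proof -
    have "\<forall>n. \<exists>w. w \<in> C \<and> d q w < 1 / real (Suc n) \<and> ll q w"
    proof
      fix n
      have o: "openin (mtop UNIV d) (C \<inter> Metric_space.mball UNIV d q (1 / real (Suc n)))"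
        using C(1) Metric_space.openin_mball[OF MX] by blast
      have "q \<in> C \<inter> Metric_space.mball UNIV d q (1 / real (Suc n))"
        using pq Metric_space.centre_in_mball_iff[OF MX] by simp
      from near_timelike(1)[OF X o this] show "\<exists>w. w \<in> C \<and> d q w < 1 / real (Suc n) \<and> ll q w"
        using Metric_space.in_mball[OF MX] by blast
    qed
    from choice[OF this] obtain qs where qs: "\<forall>n. qs n \<in> C \<and> d q (qs n) < 1 / real (Suc n) \<and> ll q (qs n)"
      by blast
    have lin: "le_in d' le' U (f p) (f (qs n))" for n
    proof (cases "f p = f (qs n)")
      case True
      then show ?thesis unfolding le_in_def by simp
    next
      case False
      have llpq: "ll p (qs n)" using push_up1[OF X pq(3)] qs by blast
      obtain a0 b0 \<sigma> where s: "curve_from_to d ll a0 b0 \<sigma> p (qs n)"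
        using lls_cpc[OF X] llpq unfolding causally_path_connected_def by blast
      then have fd: "a0 < b0" "lipschitz_curve d a0 b0 \<sigma>" "\<sigma> a0 = p" "\<sigma> b0 = qs n"
        "\<forall>s\<in>{a0..b0}. \<forall>t\<in>{a0..b0}. s < t \<longrightarrow> ll (\<sigma> s) (\<sigma> t)"
        unfolding curve_from_to_def fd_curve_def by auto
      have lest: "le (\<sigma> s) (\<sigma> t)" if "s \<in> {a0..b0}" "t \<in> {a0..b0}" "s \<le> t" for s t
      proof (cases "s = t")
        case True then show ?thesis using lls_le_refl[OF X] by simp
      next
        case False then show ?thesis using that fd(5) lls_ll_le[OF X] by force
      qed
      have \<sigma>C: "\<sigma> s \<in> C" if "s \<in> {a0..b0}" for s
      proof -
        have "le p (\<sigma> s)" using lest[of a0 s] that fd(1,3) by auto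
        moreover have "le (\<sigma> s) (qs n)" using lest[of s b0] that fd(1,4) by auto
        ultimately show ?thesis using C(4) pq(1) qs unfolding cconvex_def by blast
      qed
      obtain L\<sigma> where L\<sigma>: "\<forall>s\<in>{a0..b0}. \<forall>t\<in>{a0..b0}. d (\<sigma> s) (\<sigma> t) \<le> L\<sigma> * \<bar>s - t\<bar>"
        using fd(2) unfolding lipschitz_curve_def by blast
      have lipf: "d' (f (\<sigma> s)) (f (\<sigma> t)) \<le> (M * \<bar>L\<sigma>\<bar>) * \<bar>s - t\<bar>"
        if st: "s \<in> {a0..b0}" "t \<in> {a0..b0}" "s \<le> t" for s t
      proof -
        have "d' (f (\<sigma> s)) (f (\<sigma> t)) \<le> M * d (\<sigma> s) (\<sigma> t)"
          using VL CV \<sigma>C st lest by blast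
        also have "\<dots> \<le> M * (L\<sigma> * \<bar>s - t\<bar>)"
          using L\<sigma> st(1,2) V(3) by (intro mult_left_mono) auto
        also have "\<dots> \<le> M * (\<bar>L\<sigma>\<bar> * \<bar>s - t\<bar>)"
          using V(3) by (intro mult_left_mono mult_right_mono) auto
        finally show ?thesis by (simp add: mult.assoc)
      qed
      have "lipschitz_curve d' a0 b0 (f \<circ> \<sigma>)"
        unfolding lipschitz_curve_def
      proof (intro exI[of _ "M * \<bar>L\<sigma>\<bar>"] ballI)
        fix s t assume st: "s \<in> {a0..b0}" "t \<in> {a0..b0}"
        show "d' ((f \<circ> \<sigma>) s) ((f \<circ> \<sigma>) t) \<le> M * \<bar>L\<sigma>\<bar> * \<bar>s - t\<bar>"
        proof (cases "s \<le> t")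
          case True then show ?thesis using lipf st by simp
        next
          case False
          then have "d' (f (\<sigma> t)) (f (\<sigma> s)) \<le> M * \<bar>L\<sigma>\<bar> * \<bar>t - s\<bar>" using lipf st by simp
          then show ?thesis using Metric_space.commute[OF MY] by (simp add: abs_minus_commute)
        qed
      qed
      moreover have "\<forall>s\<in>{a0..b0}. \<forall>t\<in>{a0..b0}. s < t \<longrightarrow> le' ((f \<circ> \<sigma>) s) ((f \<circ> \<sigma>) t)"
        using fd(5) llf lls_ll_le[OF Y] by simp
      moreover have "\<exists>s\<in>{a0..b0}. \<exists>t\<in>{a0..b0}. (f \<circ> \<sigma>) s \<noteq> (f \<circ> \<sigma>) t"
        using False fd(1,3,4) by (intro bexI[of _ a0] bexI[of _ b0]) auto
      ultimately have "curve_from_to d' le' a0 b0 (f \<circ> \<sigma>) (f p) (f (qs n))"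
        unfolding curve_from_to_def fd_curve_def using fd(1,3,4) by simp
      moreover have "(f \<circ> \<sigma>) ` {a0..b0} \<subseteq> U" using \<sigma>C fU by auto
      ultimately show ?thesis unfolding le_in_def by blast
    qed
    have limp: "limitin (mtop UNIV d') (\<lambda>n. f p) (f p) sequentially"
      unfolding Metric_space.limitin_metric[OF MY] using Metric_space.mdist_zero[OF MY] by simp
    have limq: "limitin (mtop UNIV d') (\<lambda>n. f (qs n)) (f q) sequentially"
      unfolding Metric_space.limitin_metric[OF MY]
    proof (intro conjI allI impI)
      fix e :: real assume e: "e > 0"
      have "0 < e / M" using e V(3) by simp
      from reals_Archimedean[OF this] obtain N where N: "inverse (real (Suc N)) < e / M" by blast
      show "\<forall>\<^sub>F n in sequentially. f (qs n) \<in> UNIV \<and> d' (f (qs n)) (f q) < e"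
        unfolding eventually_sequentially
      proof (intro exI[of _ N] allI impI conjI)
        fix n assume n: "N \<le> n"
        show "f (qs n) \<in> UNIV" by simp
        have "d' (f q) (f (qs n)) \<le> M * d q (qs n)"
          using VL CV pq qs lls_ll_le[OF X] by blast
        also have "\<dots> \<le> M * (1 / real (Suc n))"
          using qs V(3) by (intro mult_left_mono) (auto simp: less_imp_le simp del: of_nat_Suc)
        also have "\<dots> \<le> M * inverse (real (Suc N))"
          using n V(3) by (intro mult_left_mono) (auto simp: field_simps)
        also have "\<dots> < e"
        proof -
          have "M * inverse (real (Suc N)) < M * (e / M)" by (rule mult_strict_left_mono[OF N V(3)])
          then show ?thesis using V(3) by simp
        qed
        finally show "d' (f (qs n)) (f q) < e" using Metric_space.commute[OF MY] by metis
      qed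
    qed simp
    have cc: "\<And>p q ps qs. (\<forall>n. le_in d' le' U (ps n) (qs n)) \<Longrightarrow> p \<in> U \<Longrightarrow> q \<in> U \<Longrightarrow>
        limitin (mtop UNIV d') ps p sequentially \<Longrightarrow> limitin (mtop UNIV d') qs q sequentially \<Longrightarrow>
        le_in d' le' U p q"
      using U(3) unfolding causally_closed_def by blast
    have "le_in d' le' U (f p) (f q)"
      by (rule cc[OF _ _ _ limp limq]) (use lin fU pq in auto)
    then show ?thesis
    proof (unfold le_in_def, elim disjE exE conjE)
      assume "f p = f q" then show ?thesis using lls_le_refl[OF Y] by simp
    next
      fix a1 b1 g assume "curve_from_to d' le' a1 b1 g (f p) (f q)"
      then show ?thesis unfolding curve_from_to_def fd_curve_def by force
    qed
  qed
  show ?thesis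
    using C(1,2) V(3) main VL CV by (intro exI[of _ C] exI[of _ M]) blast
qed


theorem proposition4p11:
  fixes d :: "'a \<Rightarrow> 'a \<Rightarrow> real" and ll le :: "'a \<Rightarrow> 'a \<Rightarrow> bool" and tau :: "'a \<Rightarrow> 'a \<Rightarrow> ennreal"
    and d' :: "'b \<Rightarrow> 'b \<Rightarrow> real" and ll' le' :: "'b \<Rightarrow> 'b \<Rightarrow> bool" and tau' :: "'b \<Rightarrow> 'b \<Rightarrow> ennreal"
    and f :: "'a \<Rightarrow> 'b" and \<gamma> :: "real \<Rightarrow> 'a" and a b :: real and x y :: 'a
  assumes X: "lorentzian_length_space d ll le tau"
    and Y: "lorentzian_length_space d' ll' le' tau'"
    and surj: "surj f"
    and hom: "distance_homothetic tau tau' f"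
    and lip: "locally_causally_lipschitz d le d' f"
    and sc: "strongly_causal d ll"
    and lc: "locally_compact_space (mtop UNIV d')"
    and xy: "le x y"
    and cur: "curve_from_to d le a b \<gamma> x y"
    and maxi: "Ltau tau a b \<gamma> = tau x y"
  shows "curve_from_to d' le' a b (f \<circ> \<gamma>) (f x) (f y) \<and>
         Ltau tau' a b (f \<circ> \<gamma>) = tau' (f x) (f y)"
proof -
  have MX: "Metric_space UNIV d" using lls_metric[OF X] .
  have MY: "Metric_space UNIV d'" using lls_metric[OF Y] .
  obtain c where c: "c > 0" "\<forall>p q. tau' (f p) (f q) = ennreal c * tau p q"
    using hom unfolding distance_homothetic_def by blast
  have fd: "a < b" "lipschitz_curve d a b \<gamma>" "\<exists>s\<in>{a..b}. \<exists>t\<in>{a..b}. \<gamma> s \<noteq> \<gamma> t"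
    "\<forall>s\<in>{a..b}. \<forall>t\<in>{a..b}. s < t \<longrightarrow> le (\<gamma> s) (\<gamma> t)" "\<gamma> a = x" "\<gamma> b = y"
    using cur unfolding curve_from_to_def fd_curve_def by auto
  obtain L where L: "\<forall>s\<in>{a..b}. \<forall>t\<in>{a..b}. d (\<gamma> s) (\<gamma> t) \<le> L * \<bar>s - t\<bar>"
    using fd(2) unfolding lipschitz_curve_def by blast
  have Lab: "d (\<gamma> s) (\<gamma> t) \<le> \<bar>L\<bar> * \<bar>s - t\<bar>" if "s \<in> {a..b}" "t \<in> {a..b}" for s t
  proof -
    have "d (\<gamma> s) (\<gamma> t) \<le> L * \<bar>s - t\<bar>" using L that by blast
    also have "\<dots> \<le> \<bar>L\<bar> * \<bar>s - t\<bar>" by (intro mult_right_mono) auto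
    finally show ?thesis .
  qed
  have lest: "le (\<gamma> s) (\<gamma> t)" if "s \<in> {a..b}" "t \<in> {a..b}" "s \<le> t" for s t
  proof (cases "s = t")
    case True then show ?thesis using lls_le_refl[OF X] by simp
  next
    case False then show ?thesis using that fd(4) by force
  qed
  have "\<forall>z. \<exists>C M. openin (mtop UNIV d) C \<and> z \<in> C \<and> M > 0 \<and>
           (\<forall>p\<in>C. \<forall>q\<in>C. le p q \<longrightarrow> le' (f p) (f q) \<and> d' (f p) (f q) \<le> M * d p q)"
    using local_pres[OF X Y hom lip sc] by blast
  from choice[OF this] obtain Cf where "\<forall>z. \<exists>M. openin (mtop UNIV d) (Cf z) \<and> z \<in> Cf z \<and> M > 0 \<and>
           (\<forall>p\<in>Cf z. \<forall>q\<in>Cf z. le p q \<longrightarrow> le' (f p) (f q) \<and> d' (f p) (f q) \<le> M * d p q)"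
    by blast
  from choice[OF this] obtain Mf where CM: "\<And>z. openin (mtop UNIV d) (Cf z)" "\<And>z. z \<in> Cf z" "\<And>z. Mf z > 0"
    and CMp: "\<And>z p q. p \<in> Cf z \<Longrightarrow> q \<in> Cf z \<Longrightarrow> le p q \<Longrightarrow> le' (f p) (f q) \<and> d' (f p) (f q) \<le> Mf z * d p q"
    by blast
  have "\<forall>t. \<exists>e. t \<in> {a..b} \<longrightarrow> e > 0 \<and> (\<forall>s\<in>{a..b}. \<bar>s - t\<bar> < e \<longrightarrow> \<gamma> s \<in> Cf (\<gamma> t))"
  proof
    fix t
    show "\<exists>e. t \<in> {a..b} \<longrightarrow> e > 0 \<and> (\<forall>s\<in>{a..b}. \<bar>s - t\<bar> < e \<longrightarrow> \<gamma> s \<in> Cf (\<gamma> t))"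
    proof (cases "t \<in> {a..b}")
      case False then show ?thesis by blast
    next
      case True
      have "\<exists>r>0. Metric_space.mball UNIV d (\<gamma> t) r \<subseteq> Cf (\<gamma> t)"
        using CM(1)[of "\<gamma> t"] CM(2)[of "\<gamma> t"] unfolding Metric_space.openin_mtopology[OF MX] by blast
      then obtain r where r: "r > 0" "Metric_space.mball UNIV d (\<gamma> t) r \<subseteq> Cf (\<gamma> t)"
        by blast
      have pos: "0 < r / (\<bar>L\<bar> + 1)" using r by (simp add: add_nonneg_pos)
      have "\<gamma> s \<in> Cf (\<gamma> t)" if s: "s \<in> {a..b}" "\<bar>s - t\<bar> < r / (\<bar>L\<bar> + 1)" for s
      proof -
        have "(\<bar>L\<bar> + 1) * \<bar>s - t\<bar> < r" using s(2) by (simp add: field_simps)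
        moreover have "\<bar>L\<bar> * \<bar>s - t\<bar> \<le> (\<bar>L\<bar> + 1) * \<bar>s - t\<bar>" by (intro mult_right_mono) auto
        moreover have "d (\<gamma> t) (\<gamma> s) \<le> \<bar>L\<bar> * \<bar>s - t\<bar>"
          using Lab[OF True s(1)] by (simp add: abs_minus_commute)
        ultimately have "d (\<gamma> t) (\<gamma> s) < r" by linarith
        then have "\<gamma> s \<in> Metric_space.mball UNIV d (\<gamma> t) r" using Metric_space.in_mball[OF MX] by simp
        then show ?thesis using r(2) by blast
      qed
      then show ?thesis using pos by (intro exI[of _ "r / (\<bar>L\<bar> + 1)"]) blast
    qed
  qed
  from choice[OF this] obtain e where e0: "\<forall>t. t \<in> {a..b} \<longrightarrow> e t > 0 \<and> (\<forall>s\<in>{a..b}. \<bar>s - t\<bar> < e t \<longrightarrow> \<gamma> s \<in> Cf (\<gamma> t))"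
    by blast
  have e: "\<And>t. t \<in> {a..b} \<Longrightarrow> e t > 0" using e0 by blast
  have e2: "\<And>t s. t \<in> {a..b} \<Longrightarrow> s \<in> {a..b} \<Longrightarrow> \<bar>s - t\<bar> < e t \<Longrightarrow> \<gamma> s \<in> Cf (\<gamma> t)"
    using e0 by blast
  obtain T where T: "T \<subseteq> {a..b}" "finite T" "{a..b} \<subseteq> (\<Union>t\<in>T. ball t (e t / 2))"
  proof (rule compactE_image[of "{a..b}" "{a..b}" "\<lambda>t. ball t (e t / 2)"])
    show "compact {a..b}" by simp
    show "\<And>t. t \<in> {a..b} \<Longrightarrow> open (ball t (e t / 2))" by simp
    show "{a..b} \<subseteq> (\<Union>t\<in>{a..b}. ball t (e t / 2))" using e by force
  qed blast
  have Tne: "T \<noteq> {}" using T(3) fd(1) by force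
  define \<delta> where "\<delta> = Min ((\<lambda>t. e t / 2) ` T)"
  define Mx where "Mx = Max ((\<lambda>t. Mf (\<gamma> t)) ` T)"
  define K where "K = Mx * \<bar>L\<bar>"
  have \<delta>: "\<delta> > 0" unfolding \<delta>_def using T Tne e by (subst Min_gr_iff) auto
  have \<delta>le: "\<delta> \<le> e t / 2" if "t \<in> T" for t unfolding \<delta>_def using T(2) that by (intro Min_le) auto
  have Mxge: "Mf (\<gamma> t) \<le> Mx" if "t \<in> T" for t unfolding Mx_def using T(2) that by (intro Max_ge) auto
  have close: "le' (f (\<gamma> s)) (f (\<gamma> s')) \<and> d' (f (\<gamma> s)) (f (\<gamma> s')) \<le> K * (s' - s)"
    if ss: "s \<in> {a..b}" "s' \<in> {a..b}" "s \<le> s'" "s' - s < \<delta>" for s s'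
  proof -
    obtain t where t: "t \<in> T" "s \<in> ball t (e t / 2)" using T(3) ss(1) by blast
    have ta: "t \<in> {a..b}" using t T(1) by blast
    have st: "\<bar>s - t\<bar> < e t / 2" using t(2) by (simp add: dist_real_def abs_minus_commute)
    have "\<bar>s' - t\<bar> < e t" using st ss \<delta>le[OF t(1)] by linarith
    then have in1: "\<gamma> s \<in> Cf (\<gamma> t)" "\<gamma> s' \<in> Cf (\<gamma> t)" using e2 ta ss st e[OF ta] by auto
    have lss: "le (\<gamma> s) (\<gamma> s')" using lest ss by blast
    have r: "le' (f (\<gamma> s)) (f (\<gamma> s'))" "d' (f (\<gamma> s)) (f (\<gamma> s')) \<le> Mf (\<gamma> t) * d (\<gamma> s) (\<gamma> s')"
      using CMp[OF in1 lss] by auto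
    have "Mf (\<gamma> t) * d (\<gamma> s) (\<gamma> s') \<le> Mf (\<gamma> t) * (\<bar>L\<bar> * \<bar>s - s'\<bar>)"
      using Lab[OF ss(1,2)] CM(3) by (intro mult_left_mono) (auto simp: less_imp_le)
    also have "\<dots> \<le> Mx * (\<bar>L\<bar> * \<bar>s - s'\<bar>)"
      using Mxge[OF t(1)] by (intro mult_right_mono) auto
    also have "\<dots> = K * (s' - s)" using ss(3) by (simp add: K_def)
    finally show ?thesis using r by linarith
  qed
  have chain: "\<forall>s s'. s \<in> {a..b} \<longrightarrow> s' \<in> {a..b} \<longrightarrow> s \<le> s' \<longrightarrow> s' - s \<le> real n * (\<delta> / 2) \<longrightarrow>
      le' (f (\<gamma> s)) (f (\<gamma> s')) \<and> d' (f (\<gamma> s)) (f (\<gamma> s')) \<le> K * (s' - s)" for n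
  proof (induction n)
    case 0
    show ?case
    proof (intro allI impI)
      fix s s' assume ss: "s \<in> {a..b}" "s' \<in> {a..b}" "s \<le> s'" "s' - s \<le> real 0 * (\<delta> / 2)"
      then have "s' - s < \<delta>" using \<delta> by simp
      then show "le' (f (\<gamma> s)) (f (\<gamma> s')) \<and> d' (f (\<gamma> s)) (f (\<gamma> s')) \<le> K * (s' - s)"
        using close[OF ss(1,2,3)] by blast
    qed
  next
    case (Suc n)
    show ?case
    proof (intro allI impI)
      fix s s' assume ss: "s \<in> {a..b}" "s' \<in> {a..b}" "s \<le> s'" "s' - s \<le> real (Suc n) * (\<delta> / 2)"
      show "le' (f (\<gamma> s)) (f (\<gamma> s')) \<and> d' (f (\<gamma> s)) (f (\<gamma> s')) \<le> K * (s' - s)"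
      proof (cases "s' - s < \<delta>")
        case True then show ?thesis using close ss by blast
      next
        case False
        define u where "u = s + \<delta> / 2"
        have u: "u \<in> {a..b}" "s \<le> u" "u \<le> s'" "u - s < \<delta>" "s' - u \<le> real n * (\<delta> / 2)"
          using ss False \<delta> by (auto simp: u_def algebra_simps)
        have A: "le' (f (\<gamma> s)) (f (\<gamma> u)) \<and> d' (f (\<gamma> s)) (f (\<gamma> u)) \<le> K * (u - s)"
          using close ss u by blast
        have B: "le' (f (\<gamma> u)) (f (\<gamma> s')) \<and> d' (f (\<gamma> u)) (f (\<gamma> s')) \<le> K * (s' - u)"
          using Suc.IH ss u by blast
        have "le' (f (\<gamma> s)) (f (\<gamma> s'))" using A B lls_le_trans[OF Y] by blast
        moreover have "d' (f (\<gamma> s)) (f (\<gamma> s')) \<le> d' (f (\<gamma> s)) (f (\<gamma> u)) + d' (f (\<gamma> u)) (f (\<gamma> s'))"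
          using Metric_space.triangle[OF MY] by blast
        moreover have "K * (u - s) + K * (s' - u) = K * (s' - s)" by (simp add: algebra_simps)
        ultimately show ?thesis using A B by linarith
      qed
    qed
  qed
  have all: "le' (f (\<gamma> s)) (f (\<gamma> s')) \<and> d' (f (\<gamma> s)) (f (\<gamma> s')) \<le> K * (s' - s)"
    if ss: "s \<in> {a..b}" "s' \<in> {a..b}" "s \<le> s'" for s s'
  proof -
    obtain n where n: "(s' - s) / (\<delta> / 2) \<le> real n" using real_arch_simple by blast
    then have "s' - s \<le> real n * (\<delta> / 2)" using \<delta> by (simp add: field_simps)
    then show ?thesis using chain ss by blast
  qed
  have lipc: "lipschitz_curve d' a b (f \<circ> \<gamma>)"
    unfolding lipschitz_curve_def
  proof (intro exI[of _ K] ballI)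
    fix s t assume st: "s \<in> {a..b}" "t \<in> {a..b}"
    show "d' ((f \<circ> \<gamma>) s) ((f \<circ> \<gamma>) t) \<le> K * \<bar>s - t\<bar>"
    proof (cases "s \<le> t")
      case True then show ?thesis using all[OF st True] by simp
    next
      case False
      then have "d' (f (\<gamma> t)) (f (\<gamma> s)) \<le> K * (s - t)" using all[OF st(2,1)] by simp
      then show ?thesis using False Metric_space.commute[OF MY] by (simp add: abs_if)
    qed
  qed
  have nc: "\<exists>s\<in>{a..b}. \<exists>t\<in>{a..b}. (f \<circ> \<gamma>) s \<noteq> (f \<circ> \<gamma>) t"
  proof -
    obtain s t where st: "s \<in> {a..b}" "t \<in> {a..b}" "\<gamma> s \<noteq> \<gamma> t" using fd(3) by blast
    have "f (\<gamma> s) \<noteq> f (\<gamma> t)"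
    proof
      assume "f (\<gamma> s) = f (\<gamma> t)"
      from hom_inj[OF X lls_pos[OF Y] hom sc this] show False using st(3) by blast
    qed
    then show ?thesis using st(1,2) by (intro bexI[of _ s] bexI[of _ t]) auto
  qed
  have mono: "\<forall>s\<in>{a..b}. \<forall>t\<in>{a..b}. s < t \<longrightarrow> le' ((f \<circ> \<gamma>) s) ((f \<circ> \<gamma>) t)"
    using all by fastforce
  have C1: "curve_from_to d' le' a b (f \<circ> \<gamma>) (f x) (f y)"
    unfolding curve_from_to_def fd_curve_def using fd(1,5,6) lipc nc mono by simp
  have "Ltau tau' a b (f \<circ> \<gamma>) = ennreal c * Ltau tau a b \<gamma>"
    unfolding Ltau_def case_prod_unfold
    by (simp add: c(2) sum_distrib_left mult_INF_ennreal[OF c(1)])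
  also have "\<dots> = tau' (f x) (f y)" using maxi c(2) by simp
  finally show ?thesis using C1 by blast
qed

end
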